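(* Let $R$ be a ring. Then $R$ is feckly clean if and only if for any two distinct maximal ideals $M$ and $N$ of $R$ there exists $e\in R$ such that $e\in M$, $1-e\in N$ and $eR(1-e)\subseteq J(R)$.
   Context: Rings are associative with identity, not necessarily commutative; $J(R)$ is the Jacobson radical; maximal ideals are two-sided. An element $u\in R$ is full if $RuR=R$. An element $a\in R$ is feckly clean if there exist $e\in R$ and a full element $u\in R$ with $a=e+u$ and $eR(1-e)\subseteq J(R)$; $R$ is feckly clean if every element is feckly clean. *)

theory Defs
  imports Main
begin

definition two_sided_ideal :: "'a::ring_1 set \<Rightarrow> bool" where
  "two_sided_ideal I \<longleftrightarrow> 0 \<in> I \<and> (\<forall>x\<in>I. \<forall>y\<in>I. x - y \<in> I)
     \<and> (\<forall>r x. x \<in> I \<longrightarrow> r * x \<in> I \<and> x * r \<in> I)"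

definition maximal_ideal :: "'a::ring_1 set \<Rightarrow> bool" where
  "maximal_ideal M \<longleftrightarrow> two_sided_ideal M \<and> M \<noteq> UNIV
     \<and> (\<forall>I. two_sided_ideal I \<and> M \<subseteq> I \<longrightarrow> I = M \<or> I = UNIV)"

definition left_ideal :: "'a::ring_1 set \<Rightarrow> bool" where
  "left_ideal I \<longleftrightarrow> 0 \<in> I \<and> (\<forall>x\<in>I. \<forall>y\<in>I. x - y \<in> I)
     \<and> (\<forall>r x. x \<in> I \<longrightarrow> r * x \<in> I)"

definition maximal_left_ideal :: "'a::ring_1 set \<Rightarrow> bool" where
  "maximal_left_ideal M \<longleftrightarrow> left_ideal M \<and> M \<noteq> UNIV
     \<and> (\<forall>I. left_ideal I \<and> M \<subseteq> I \<longrightarrow> I = M \<or> I = UNIV)"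

definition jacobson :: "'a::ring_1 set" where
  "jacobson = \<Inter>{M. maximal_left_ideal M}"

text \<open>RuR: the two-sided ideal generated by u (finite sums of r*u*s).\<close>
definition RuR :: "'a::ring_1 \<Rightarrow> 'a set" where
  "RuR u = {x. \<exists>n (r::nat \<Rightarrow> 'a) s. x = (\<Sum>i<n. r i * u * s i)}"

definition full :: "'a::ring_1 \<Rightarrow> bool" where
  "full u \<longleftrightarrow> RuR u = UNIV"

definition feckly_clean_elem :: "'a::ring_1 \<Rightarrow> bool" where
  "feckly_clean_elem a \<longleftrightarrow> (\<exists>e u. full u \<and> a = e + u \<and> (\<forall>r. e * r * (1 - e) \<in> jacobson))"

definition feckly_clean :: "'a::ring_1 itself \<Rightarrow> bool" where
  "feckly_clean _ \<longleftrightarrow> (\<forall>a::'a. feckly_clean_elem a)"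

end

theory Submission
  imports Defs
begin


lemma tsi_add: "two_sided_ideal I \<Longrightarrow> x \<in> I \<Longrightarrow> y \<in> I \<Longrightarrow> x + y \<in> I"
proof -
  assume h: "two_sided_ideal I" "x \<in> I" "y \<in> I"
  then have "0 - y \<in> I" by (auto simp: two_sided_ideal_def)
  with h have "x - (0 - y) \<in> I" unfolding two_sided_ideal_def by blast
  then show ?thesis by simp
qed

lemma tsi_diff: "two_sided_ideal I \<Longrightarrow> x \<in> I \<Longrightarrow> y \<in> I \<Longrightarrow> x - y \<in> I"
  by (auto simp: two_sided_ideal_def)
lemma tsi_lmult: "two_sided_ideal I \<Longrightarrow> x \<in> I \<Longrightarrow> r * x \<in> I"
  by (auto simp: two_sided_ideal_def)
lemma tsi_rmult: "two_sided_ideal I \<Longrightarrow> x \<in> I \<Longrightarrow> x * r \<in> I"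
  by (auto simp: two_sided_ideal_def)
lemma tsi_zero: "two_sided_ideal I \<Longrightarrow> 0 \<in> I"
  by (auto simp: two_sided_ideal_def)
lemma tsi_one: "two_sided_ideal I \<Longrightarrow> 1 \<in> I \<Longrightarrow> I = UNIV"
  using tsi_rmult[of I 1] by auto
lemma tsi_sum: "two_sided_ideal I \<Longrightarrow> (\<forall>i<(n::nat). f i \<in> I) \<Longrightarrow> (\<Sum>i<n. f i) \<in> I"
  by (induction n) (auto simp: tsi_zero tsi_add)

lemma li_one: "left_ideal I \<Longrightarrow> 1 \<in> I \<Longrightarrow> I = UNIV"
  unfolding left_ideal_def by (metis UNIV_eq_I mult.right_neutral)

lemma max_tsi_proper: "maximal_ideal P \<Longrightarrow> 1 \<notin> P"
  unfolding maximal_ideal_def using tsi_one by blast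

lemma zorn_gen:
  fixes Q :: "'a::ring_1 set \<Rightarrow> bool"
  assumes ch: "\<And>C. C \<noteq> {} \<Longrightarrow> (\<forall>I\<in>C. Q I) \<Longrightarrow> (\<forall>X\<in>C. \<forall>Y\<in>C. X \<subseteq> Y \<or> Y \<subseteq> X) \<Longrightarrow> Q (\<Union>C)"
    and q0: "Q I0" and n0: "1 \<notin> I0"
    and one: "\<And>I. Q I \<Longrightarrow> 1 \<in> I \<Longrightarrow> I = UNIV"
  shows "\<exists>M. Q M \<and> I0 \<subseteq> M \<and> M \<noteq> UNIV \<and> (\<forall>I. Q I \<and> M \<subseteq> I \<longrightarrow> I = M \<or> I = UNIV)"
proof -
  let ?A = "{I. Q I \<and> I0 \<subseteq> I \<and> 1 \<notin> I}"
  have "\<exists>M\<in>?A. \<forall>X\<in>?A. M \<subseteq> X \<longrightarrow> X = M"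
  proof (rule subset_Zorn)
    fix C assume c: "subset.chain ?A C"
    show "\<exists>U\<in>?A. \<forall>X\<in>C. X \<subseteq> U"
    proof (cases "C = {}")
      case True then show ?thesis using q0 n0 by auto
    next
      case False
      have "Q (\<Union>C)" using ch[OF False] c by (auto simp: subset_chain_def)
      moreover have "I0 \<subseteq> \<Union>C" using False c unfolding subset_chain_def by blast
      moreover have "1 \<notin> \<Union>C" using c by (auto simp: subset_chain_def)
      ultimately show ?thesis by blast
    qed
  qed
  then obtain M where M: "M \<in> ?A" "\<forall>X\<in>?A. M \<subseteq> X \<longrightarrow> X = M" by blast
  show ?thesis
  proof (intro exI conjI allI impI)
    show "Q M" "I0 \<subseteq> M" using M by auto
    show "M \<noteq> UNIV" using M by auto
    fix I assume "Q I \<and> M \<subseteq> I"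
    then show "I = M \<or> I = UNIV" using M one by (cases "1 \<in> I") auto
  qed
qed

lemma max_tsi_exists:
  assumes "two_sided_ideal (I::'a::ring_1 set)" "1 \<notin> I"
  shows "\<exists>M. maximal_ideal M \<and> I \<subseteq> M"
proof -
  have "\<exists>M. two_sided_ideal M \<and> I \<subseteq> M \<and> M \<noteq> UNIV \<and> (\<forall>J. two_sided_ideal J \<and> M \<subseteq> J \<longrightarrow> J = M \<or> J = UNIV)"
  proof (rule zorn_gen[where Q=two_sided_ideal, OF _ assms])
    fix C :: "'a set set" assume "C \<noteq> {}" "\<forall>I\<in>C. two_sided_ideal I" "\<forall>X\<in>C. \<forall>Y\<in>C. X \<subseteq> Y \<or> Y \<subseteq> X"
    note h = this
    show "two_sided_ideal (\<Union>C)"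
      unfolding two_sided_ideal_def
    proof (intro conjI ballI allI impI)
      show "0 \<in> \<Union>C" using h(1,2) by (auto simp: two_sided_ideal_def)
    next
      fix x y assume "x \<in> \<Union>C" "y \<in> \<Union>C"
      then obtain X Y where XY: "X \<in> C" "Y \<in> C" "x \<in> X" "y \<in> Y" by blast
      show "x - y \<in> \<Union>C"
      proof (cases "X \<subseteq> Y")
        case True then show ?thesis using XY h(2) tsi_diff[of Y x y] by blast
      next
        case False then have "Y \<subseteq> X" using h(3) XY by blast
        then show ?thesis using XY h(2) tsi_diff[of X x y] by blast
      qed
    next
      fix r x assume "x \<in> \<Union>C"
      then show "r * x \<in> \<Union>C" using h(2) tsi_lmult by blast
    next
      fix r x assume "x \<in> \<Union>C"
      then show "x * r \<in> \<Union>C" using h(2) tsi_rmult by blast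
    qed
  qed (use tsi_one in auto)
  then show ?thesis unfolding maximal_ideal_def by blast
qed

lemma max_li_exists:
  assumes "left_ideal (I::'a::ring_1 set)" "1 \<notin> I"
  shows "\<exists>M. maximal_left_ideal M \<and> I \<subseteq> M"
proof -
  have "\<exists>M. left_ideal M \<and> I \<subseteq> M \<and> M \<noteq> UNIV \<and> (\<forall>J. left_ideal J \<and> M \<subseteq> J \<longrightarrow> J = M \<or> J = UNIV)"
  proof (rule zorn_gen[where Q=left_ideal, OF _ assms])
    fix C :: "'a set set" assume "C \<noteq> {}" "\<forall>I\<in>C. left_ideal I" "\<forall>X\<in>C. \<forall>Y\<in>C. X \<subseteq> Y \<or> Y \<subseteq> X"
    note h = this
    show "left_ideal (\<Union>C)"
      unfolding left_ideal_def
    proof (intro conjI ballI allI impI)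
      show "0 \<in> \<Union>C" using h(1,2) by (auto simp: left_ideal_def)
    next
      fix x y assume "x \<in> \<Union>C" "y \<in> \<Union>C"
      then obtain X Y where XY: "X \<in> C" "Y \<in> C" "x \<in> X" "y \<in> Y" by blast
      show "x - y \<in> \<Union>C"
      proof (cases "X \<subseteq> Y")
        case True then show ?thesis using XY h(2) unfolding left_ideal_def by blast
      next
        case False then have "Y \<subseteq> X" using h(3) XY by blast
        then show ?thesis using XY h(2) unfolding left_ideal_def by blast
      qed
    next
      fix r x assume "x \<in> \<Union>C"
      then show "r * x \<in> \<Union>C" using h(2) unfolding left_ideal_def by blast
    qed
  qed (use li_one in auto)
  then show ?thesis unfolding maximal_left_ideal_def by blast
qed



lemma li_diff: "left_ideal I \<Longrightarrow> x \<in> I \<Longrightarrow> y \<in> I \<Longrightarrow> x - y \<in> I"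
  by (auto simp: left_ideal_def)
lemma li_lmult: "left_ideal I \<Longrightarrow> x \<in> I \<Longrightarrow> r * x \<in> I"
  by (auto simp: left_ideal_def)
lemma li_zero: "left_ideal I \<Longrightarrow> 0 \<in> I"
  by (auto simp: left_ideal_def)
lemma li_add: "left_ideal I \<Longrightarrow> x \<in> I \<Longrightarrow> y \<in> I \<Longrightarrow> x + y \<in> I"
proof -
  assume h: "left_ideal I" "x \<in> I" "y \<in> I"
  then have "0 - y \<in> I" by (auto simp: left_ideal_def)
  with h have "x - (0 - y) \<in> I" unfolding left_ideal_def by blast
  then show ?thesis by simp
qed

lemma colon_max:
  fixes L :: "'a::ring_1 set"
  assumes L: "maximal_left_ideal L" and ne: "{y. y * r \<in> L} \<noteq> UNIV"
  shows "maximal_left_ideal {y. y * r \<in> L}"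
proof -
  let ?K = "{y. y * r \<in> L}"
  have lL: "left_ideal L" using L by (simp add: maximal_left_ideal_def)
  have lK: "left_ideal ?K"
    unfolding left_ideal_def
  proof (intro conjI ballI allI impI)
    show "0 \<in> ?K" using lL by (simp add: li_zero)
  next
    fix x y assume "x \<in> ?K" "y \<in> ?K"
    then show "x - y \<in> ?K" using lL li_diff by (force simp: left_diff_distrib)
  next
    fix t x assume "x \<in> ?K"
    then show "t * x \<in> ?K" using lL li_lmult by (force simp: mult.assoc)
  qed
  have "I = ?K \<or> I = UNIV" if I: "left_ideal I" "?K \<subseteq> I" for I
  proof (rule ccontr)
    assume "\<not> (I = ?K \<or> I = UNIV)"
    then obtain i where i: "i \<in> I" "i \<notin> ?K" using I by blast
    define w where "w = i * r"
    have wL: "w \<notin> L" using i w_def by simp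
    let ?L2 = "{z. \<exists>l\<in>L. \<exists>t. z = l + t * w}"
    have lL2: "left_ideal ?L2"
      unfolding left_ideal_def
    proof (intro conjI ballI allI impI)
      have "(0::'a) = 0 + 0 * w" by simp
      then show "0 \<in> ?L2" using lL li_zero by blast
    next
      fix x y assume "x \<in> ?L2" "y \<in> ?L2"
      then obtain l1 t1 l2 t2 where "l1 \<in> L" "l2 \<in> L" "x = l1 + t1 * w" "y = l2 + t2 * w" by blast
      then have "x - y = (l1 - l2) + (t1 - t2) * w" "l1 - l2 \<in> L"
        using lL li_diff by (auto simp: algebra_simps)
      then show "x - y \<in> ?L2" by blast
    next
      fix s x assume "x \<in> ?L2"
      then obtain l t where "l \<in> L" "x = l + t * w" by blast
      then have "s * x = s * l + (s * t) * w" "s * l \<in> L"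
        using lL li_lmult by (auto simp: algebra_simps)
      then show "s * x \<in> ?L2" by blast
    qed
    have "L \<subseteq> ?L2"
    proof
      fix x assume "x \<in> L"
      moreover have "x = x + 0 * w" by simp
      ultimately show "x \<in> ?L2" by blast
    qed
    moreover have "w \<in> ?L2"
    proof -
      have "w = 0 + 1 * w" by simp
      then show ?thesis using lL li_zero by blast
    qed
    ultimately have "?L2 = UNIV" using L lL2 wL unfolding maximal_left_ideal_def by blast
    have "y \<in> I" for y
    proof -
      have "y * r \<in> ?L2" using \<open>?L2 = UNIV\<close> by blast
      then obtain l t where lt: "l \<in> L" "y * r = l + t * w" by blast
      have "(y - t * i) * r = l" using lt w_def by (simp add: algebra_simps)
      then have "y - t * i \<in> ?K" using lt by simp
      then have "y - t * i \<in> I" using I by blast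
      moreover have "t * i \<in> I" using I(1) i li_lmult by blast
      ultimately have "(y - t * i) + t * i \<in> I" using I(1) li_add by blast
      then show ?thesis by simp
    qed
    then have "I = UNIV" by blast
    then show False using \<open>\<not> (I = ?K \<or> I = UNIV)\<close> by blast
  qed
  then show ?thesis using lK ne unfolding maximal_left_ideal_def by blast
qed

lemma jac_in: "j \<in> jacobson \<Longrightarrow> maximal_left_ideal L \<Longrightarrow> j \<in> L"
  by (auto simp: jacobson_def)

lemma jac_rmult: "j \<in> jacobson \<Longrightarrow> j * r \<in> jacobson"
proof -
  assume j: "j \<in> jacobson"
  have "j * r \<in> L" if L: "maximal_left_ideal L" for L
  proof (cases "{y. y * r \<in> L} = UNIV")
    case True then show ?thesis by blast
  next
    case False
    then have "j \<in> {y. y * r \<in> L}" using colon_max[OF L False] jac_in[OF j] by blast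
    then show ?thesis by simp
  qed
  then show ?thesis by (auto simp: jacobson_def)
qed

lemma jac_ideal: "two_sided_ideal (jacobson :: 'a::ring_1 set)"
  unfolding two_sided_ideal_def
proof (intro conjI ballI allI impI)
  show "0 \<in> (jacobson :: 'a set)" by (auto simp: jacobson_def maximal_left_ideal_def li_zero)
next
  fix x y :: 'a assume "x \<in> jacobson" "y \<in> jacobson"
  then show "x - y \<in> jacobson" by (auto simp: jacobson_def maximal_left_ideal_def li_diff)
next
  fix r x :: 'a assume "x \<in> jacobson"
  then show "r * x \<in> jacobson" by (auto simp: jacobson_def maximal_left_ideal_def li_lmult)
next
  fix r x :: 'a assume "x \<in> jacobson"
  then show "x * r \<in> jacobson" by (rule jac_rmult)
qed

lemma jac_sub_max:
  fixes P :: "'a::ring_1 set"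
  assumes P: "maximal_ideal P"
  shows "jacobson \<subseteq> P"
proof -
  have tP: "two_sided_ideal P" using P by (simp add: maximal_ideal_def)
  have "left_ideal P" using tP by (auto simp: two_sided_ideal_def left_ideal_def)
  moreover have "1 \<notin> P" using P max_tsi_proper by blast
  ultimately obtain L where L: "maximal_left_ideal L" "P \<subseteq> L" using max_li_exists by blast
  have lL: "left_ideal L" using L by (simp add: maximal_left_ideal_def)
  let ?C = "{x. \<forall>r. x * r \<in> L}"
  have tC: "two_sided_ideal ?C"
    unfolding two_sided_ideal_def
  proof (intro conjI ballI allI impI)
    show "0 \<in> ?C" using lL li_zero by simp
  next
    fix x y assume "x \<in> ?C" "y \<in> ?C"
    then show "x - y \<in> ?C" using lL li_diff by (force simp: left_diff_distrib)
  next
    fix t x assume "x \<in> ?C"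
    then show "t * x \<in> ?C" using lL li_lmult by (force simp: mult.assoc)
  next
    fix t x assume "x \<in> ?C"
    then show "x * t \<in> ?C" by (simp add: mult.assoc)
  qed
  have "P \<subseteq> ?C" using L(2) tP tsi_rmult by blast
  moreover have "?C \<noteq> UNIV"
  proof
    assume "?C = UNIV" then have "1 * 1 \<in> L" by blast
    then show False using L(1) li_one lL unfolding maximal_left_ideal_def by auto
  qed
  ultimately have CP: "?C = P" using P tC unfolding maximal_ideal_def by blast
  have "j \<in> ?C" if j: "j \<in> jacobson" for j
    using jac_rmult[OF j] jac_in L(1) by blast
  then show ?thesis using CP by blast
qed



lemma RuR_I: "(x::'a::ring_1) = (\<Sum>i<(n::nat). r i * u * s i) \<Longrightarrow> x \<in> RuR u"
  unfolding RuR_def by blast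
lemma RuR_E: "x \<in> RuR u \<Longrightarrow> (\<And>n r s. x = (\<Sum>i<(n::nat). r i * u * s i) \<Longrightarrow> thesis) \<Longrightarrow> thesis"
  unfolding RuR_def by blast

lemma RuR_add_term:
  assumes "x \<in> RuR u" shows "x + t * u * s \<in> RuR u"
proof -
  obtain n r s' where x: "x = (\<Sum>i<(n::nat). r i * u * s' i)" using assms by (rule RuR_E)
  have "x + t * u * s = (\<Sum>i<Suc n. (r(n := t)) i * u * (s'(n := s)) i)"
  proof -
    have "(\<Sum>i<n. (r(n := t)) i * u * (s'(n := s)) i) = (\<Sum>i<n. r i * u * s' i)"
      by (rule sum.cong) auto
    then show ?thesis using x by (simp add: sum.lessThan_Suc)
  qed
  then show ?thesis by (rule RuR_I)
qed

lemma RuR_add_sum: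
  "x \<in> RuR u \<Longrightarrow> x + (\<Sum>i<(m::nat). f i * u * g i) \<in> RuR u"
proof (induction m arbitrary: x)
  case 0 then show ?case by simp
next
  case (Suc m)
  have "x + (\<Sum>i<Suc m. f i * u * g i) = (x + (\<Sum>i<m. f i * u * g i)) + f m * u * g m"
    by (simp add: add.assoc)
  then show ?case using Suc RuR_add_term by metis
qed

lemma RuR_ideal: "two_sided_ideal (RuR u)"
  unfolding two_sided_ideal_def
proof (intro conjI ballI allI impI)
  have "(0::'a) = (\<Sum>i<0. 0 * u * 0)" by simp
  then show "0 \<in> RuR u" by (rule RuR_I)
next
  fix x y assume x: "x \<in> RuR u" and yy: "y \<in> RuR u"
  from yy obtain n r s where y: "y = (\<Sum>i<(n::nat). r i * u * s i)" by (rule RuR_E)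
  have "x - y = x + (\<Sum>i<n. (- r i) * u * s i)" using y by (simp add: sum_negf)
  then show "x - y \<in> RuR u" using RuR_add_sum[OF x] by metis
next
  fix t x assume "x \<in> RuR u"
  then obtain n r s where x: "x = (\<Sum>i<(n::nat). r i * u * s i)" by (rule RuR_E)
  have "t * x = (\<Sum>i<n. (t * r i) * u * s i)" using x by (simp add: sum_distrib_left mult.assoc)
  then show "t * x \<in> RuR u" by (rule RuR_I)
next
  fix t x assume "x \<in> RuR u"
  then obtain n r s where x: "x = (\<Sum>i<(n::nat). r i * u * s i)" by (rule RuR_E)
  have "x * t = (\<Sum>i<n. r i * u * (s i * t))" using x by (simp add: sum_distrib_right mult.assoc)
  then show "x * t \<in> RuR u" by (rule RuR_I)
qed

lemma u_in_RuR: "u \<in> RuR u"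
proof -
  have "u = (\<Sum>i<Suc 0. (\<lambda>_. 1) i * u * (\<lambda>_. 1) i)" by simp
  then show ?thesis by (rule RuR_I)
qed

lemma full_not_max: "full u \<Longrightarrow> maximal_ideal P \<Longrightarrow> u \<notin> P"
proof
  assume f: "full u" and P: "maximal_ideal P" and u: "u \<in> P"
  have tP: "two_sided_ideal P" using P by (simp add: maximal_ideal_def)
  have "RuR u \<subseteq> P"
  proof
    fix x assume "x \<in> RuR u"
    then obtain n r s where x: "x = (\<Sum>i<(n::nat). r i * u * s i)" by (rule RuR_E)
    have "\<forall>i<n. r i * u * s i \<in> P" using tP u tsi_lmult tsi_rmult by blast
    then show "x \<in> P" using x tsi_sum[OF tP] by simp
  qed
  then show False using f P max_tsi_proper unfolding full_def by blast
qed

lemma not_max_full: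
  assumes "\<forall>P. maximal_ideal P \<longrightarrow> u \<notin> P" shows "full u"
proof (rule ccontr)
  assume "\<not> full u"
  then have "1 \<notin> RuR u" using tsi_one[OF RuR_ideal] unfolding full_def by blast
  then obtain P where "maximal_ideal P" "RuR u \<subseteq> P" using max_tsi_exists[OF RuR_ideal] by blast
  then show False using assms u_in_RuR by blast
qed

definition S :: "'a::ring_1 \<Rightarrow> bool" where
  "S e \<longleftrightarrow> (\<forall>r. e * r * (1 - e) \<in> jacobson)"

lemma dich:
  fixes P :: "'a::ring_1 set"
  assumes P: "maximal_ideal P" and e: "S e"
  shows "e \<in> P \<or> 1 - e \<in> P"
proof (rule ccontr)
  assume ne: "\<not> (e \<in> P \<or> 1 - e \<in> P)"
  have tP: "two_sided_ideal P" using P by (simp add: maximal_ideal_def)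
  have JP: "jacobson \<subseteq> P" using jac_sub_max[OF P] .
  let ?I = "{x. \<forall>r. x * r * (1 - e) \<in> P}"
  have tI: "two_sided_ideal ?I"
    unfolding two_sided_ideal_def
  proof (intro conjI ballI allI impI)
    show "0 \<in> ?I" using tP tsi_zero by simp
  next
    fix x y assume xy: "x \<in> ?I" "y \<in> ?I"
    show "x - y \<in> ?I" unfolding mem_Collect_eq
    proof
      fix r
      have "x * r * (1 - e) \<in> P" "y * r * (1 - e) \<in> P" using xy by auto
      then have "x * r * (1 - e) - y * r * (1 - e) \<in> P" by (rule tsi_diff[OF tP])
      moreover have "(x - y) * r * (1 - e) = x * r * (1 - e) - y * r * (1 - e)"
        by (simp add: algebra_simps)
      ultimately show "(x - y) * r * (1 - e) \<in> P" by simp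
    qed
  next
    fix t x assume x: "x \<in> ?I"
    show "t * x \<in> ?I" unfolding mem_Collect_eq
    proof
      fix r
      have "x * r * (1 - e) \<in> P" using x by auto
      then have "t * (x * r * (1 - e)) \<in> P" by (rule tsi_lmult[OF tP])
      then show "t * x * r * (1 - e) \<in> P" by (simp add: mult.assoc)
    qed
  next
    fix t x assume "x \<in> ?I"
    then have "\<forall>r. x * (t * r) * (1 - e) \<in> P" by blast
    then show "x * t \<in> ?I" by (simp add: mult.assoc)
  qed
  have "P \<subseteq> ?I" using tP tsi_rmult by blast
  moreover have "e \<in> ?I" using e JP unfolding S_def by blast
  ultimately have "?I = UNIV" using P tI ne unfolding maximal_ideal_def by blast
  then have "1 * 1 * (1 - e) \<in> P" by blast
  then show False using ne by simp
qed

lemma comax: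
  fixes M N :: "'a::ring_1 set"
  assumes M: "maximal_ideal M" and N: "maximal_ideal N" and ne: "M \<noteq> N"
  shows "\<exists>m\<in>M. 1 - m \<in> N"
proof -
  have tM: "two_sided_ideal M" using M by (simp add: maximal_ideal_def)
  have tN: "two_sided_ideal N" using N by (simp add: maximal_ideal_def)
  let ?I = "{x. \<exists>m\<in>M. x - m \<in> N}"
  have tI: "two_sided_ideal ?I"
    unfolding two_sided_ideal_def
  proof (intro conjI ballI allI impI)
    show "0 \<in> ?I" using tM tN tsi_zero by force
  next
    fix x y assume "x \<in> ?I" "y \<in> ?I"
    then obtain m1 m2 where "m1 \<in> M" "m2 \<in> M" "x - m1 \<in> N" "y - m2 \<in> N" by blast
    moreover have "(x - y) - (m1 - m2) = (x - m1) - (y - m2)" by (simp add: algebra_simps)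
    ultimately show "x - y \<in> ?I" using tsi_diff[OF tM] tsi_diff[OF tN] by (metis (no_types, lifting) mem_Collect_eq)
  next
    fix t x assume "x \<in> ?I"
    then obtain m where "m \<in> M" "x - m \<in> N" by blast
    moreover have "t * x - t * m = t * (x - m)" by (simp add: algebra_simps)
    ultimately show "t * x \<in> ?I" using tsi_lmult[OF tM] tsi_lmult[OF tN] by (metis (no_types, lifting) mem_Collect_eq)
  next
    fix t x assume "x \<in> ?I"
    then obtain m where "m \<in> M" "x - m \<in> N" by blast
    moreover have "x * t - m * t = (x - m) * t" by (simp add: algebra_simps)
    ultimately show "x * t \<in> ?I" using tsi_rmult[OF tM] tsi_rmult[OF tN] by (metis (no_types, lifting) mem_Collect_eq)
  qed
  have MI: "M \<subseteq> ?I" using tN tsi_zero by force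
  have NI: "N \<subseteq> ?I"
  proof
    fix x assume "x \<in> N"
    then have "x - 0 \<in> N" by simp
    then show "x \<in> ?I" using tM tsi_zero by blast
  qed
  have "?I \<noteq> M"
  proof
    assume "?I = M"
    then have "N \<subseteq> M" using NI by blast
    then have "M = N" using N tM M unfolding maximal_ideal_def by blast
    then show False using ne by blast
  qed
  then have "?I = UNIV" using M tI MI unfolding maximal_ideal_def by blast
  then have "1 \<in> ?I" by blast
  then show ?thesis by blast
qed

inductive_set gen :: "'a::ring_1 set \<Rightarrow> 'a set" for X where
  g0: "0 \<in> gen X"
| gX: "x \<in> X \<Longrightarrow> x \<in> gen X"
| gd: "x \<in> gen X \<Longrightarrow> y \<in> gen X \<Longrightarrow> x - y \<in> gen X"
| gl: "x \<in> gen X \<Longrightarrow> r * x \<in> gen X"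
| gr: "x \<in> gen X \<Longrightarrow> x * r \<in> gen X"

lemma gen_ideal: "two_sided_ideal (gen X)"
  unfolding two_sided_ideal_def
proof (intro conjI ballI allI impI)
  show "0 \<in> gen X" by (rule gen.g0)
next
  fix x y assume "x \<in> gen X" "y \<in> gen X"
  then show "x - y \<in> gen X" by (rule gen.gd)
next
  fix r x assume "x \<in> gen X"
  then show "r * x \<in> gen X" by (rule gen.gl)
next
  fix r x assume "x \<in> gen X"
  then show "x * r \<in> gen X" by (rule gen.gr)
qed

lemma gen_min: "two_sided_ideal I \<Longrightarrow> X \<subseteq> I \<Longrightarrow> gen X \<subseteq> I"
proof
  fix x assume I: "two_sided_ideal I" "X \<subseteq> I" and x: "x \<in> gen X"
  from x show "x \<in> I"
  proof (induction rule: gen.induct)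
    case g0 then show ?case by (rule tsi_zero[OF I(1)])
  next
    case (gX x) then show ?case using I(2) by blast
  next
    case (gd x y)
    from gd.IH show ?case by (rule tsi_diff[OF I(1)])
  next
    case (gl x r)
    from gl.IH show ?case by (rule tsi_lmult[OF I(1)])
  next
    case (gr x r)
    from gr.IH show ?case by (rule tsi_rmult[OF I(1)])
  qed
qed

lemma gen_mono: "X \<subseteq> Y \<Longrightarrow> gen X \<subseteq> gen Y"
proof (rule gen_min[OF gen_ideal])
  assume "X \<subseteq> Y" then show "X \<subseteq> gen Y" using gen.gX by blast
qed

lemma gen_fin: "x \<in> gen X \<Longrightarrow> \<exists>F. finite F \<and> F \<subseteq> X \<and> x \<in> gen F"
proof (induction rule: gen.induct)
  case g0
  have "finite {}" "{} \<subseteq> X" "0 \<in> gen {}" by (auto intro: gen.g0)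
  then show ?case by blast
next
  case (gX x)
  have "finite {x}" "{x} \<subseteq> X" "x \<in> gen {x}" using gX by (auto intro: gen.gX)
  then show ?case by blast
next
  case (gd x y)
  then obtain F1 F2 where F: "finite F1" "F1 \<subseteq> X" "x \<in> gen F1" "finite F2" "F2 \<subseteq> X" "y \<in> gen F2" by blast
  have m: "gen F1 \<subseteq> gen (F1 \<union> F2)" "gen F2 \<subseteq> gen (F1 \<union> F2)" by (simp_all add: gen_mono)
  have "x - y \<in> gen (F1 \<union> F2)" using F(3,6) m by (blast intro: gen.gd)
  moreover have "finite (F1 \<union> F2)" "F1 \<union> F2 \<subseteq> X" using F by auto
  ultimately show ?case by blast
next
  case (gl x r)
  then obtain F where "finite F" "F \<subseteq> X" "x \<in> gen F" by blast
  then show ?case using gen.gl by blast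
next
  case (gr x r)
  then obtain F where "finite F" "F \<subseteq> X" "x \<in> gen F" by blast
  then show ?case using gen.gr by blast
qed

lemma gen_sup: "X \<subseteq> gen X"
proof
  fix x assume "x \<in> X" then show "x \<in> gen X" by (rule gen.gX)
qed

lemma compact:
  fixes X :: "'a::ring_1 set"
  assumes "\<forall>P. maximal_ideal P \<longrightarrow> \<not> X \<subseteq> P"
  shows "\<exists>F. finite F \<and> F \<subseteq> X \<and> (\<forall>P. maximal_ideal P \<longrightarrow> \<not> F \<subseteq> P)"
proof -
  have "1 \<in> gen X"
  proof (rule ccontr)
    assume "1 \<notin> gen X"
    then obtain P where P: "maximal_ideal P" "gen X \<subseteq> P" using max_tsi_exists[OF gen_ideal] by blast
    have "X \<subseteq> P" using gen_sup P(2) by (rule subset_trans)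
    then show False using assms P(1) by blast
  qed
  then obtain F where F: "finite F" "F \<subseteq> X" "1 \<in> gen F" using gen_fin by blast
  have "\<not> F \<subseteq> P" if P: "maximal_ideal P" for P
  proof
    assume FP: "F \<subseteq> P"
    have tP: "two_sided_ideal P" using P by (simp add: maximal_ideal_def)
    have "gen F \<subseteq> P" by (rule gen_min[OF tP FP])
    then have "1 \<in> P" using F(3) by blast
    then show False using max_tsi_proper[OF P] by blast
  qed
  then show ?thesis using F(1,2) by blast
qed

lemma S_zero: "S 0" by (simp add: S_def jac_ideal tsi_zero)
lemma S_one: "S 1" by (simp add: S_def jac_ideal tsi_zero)

lemma S_mult: assumes "S e" "S f" shows "S (e * f)"
  unfolding S_def
proof
  fix r
  have J: "two_sided_ideal (jacobson::'a set)" by (rule jac_ideal)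
  have a: "e * (f * r) * (1 - e) \<in> jacobson" using assms(1) by (simp add: S_def)
  have b0: "f * (r * e) * (1 - f) \<in> jacobson" using assms(2) by (simp add: S_def)
  have b: "e * (f * (r * e) * (1 - f)) \<in> jacobson" using tsi_lmult[OF J b0] .
  have "e * f * r * (1 - e * f) = e * (f * r) * (1 - e) + e * (f * (r * e) * (1 - f))"
    by (simp add: algebra_simps)
  then show "e * f * r * (1 - e * f) \<in> jacobson" using a b J tsi_add by metis
qed

lemma S_join: assumes "S e" "S f" shows "S (e + f - e * f)"
  unfolding S_def
proof
  fix r
  have J: "two_sided_ideal (jacobson::'a set)" by (rule jac_ideal)
  have a0: "e * r * (1 - e) \<in> jacobson" using assms(1) by (simp add: S_def)
  have a: "e * r * (1 - e) * (1 - f) \<in> jacobson" using tsi_rmult[OF J a0] .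
  have b: "f * (r * (1 - e)) * (1 - f) \<in> jacobson" using assms(2) by (simp add: S_def)
  have c: "e * (f * (r * (1 - e)) * (1 - f)) \<in> jacobson" using b J tsi_lmult by blast
  have "(e + f - e * f) * r * (1 - (e + f - e * f)) =
        e * r * (1 - e) * (1 - f) + f * (r * (1 - e)) * (1 - f) - e * (f * (r * (1 - e)) * (1 - f))"
    by (simp add: algebra_simps)
  then show "(e + f - e * f) * r * (1 - (e + f - e * f)) \<in> jacobson"
    using a b c J tsi_add tsi_diff by metis
qed



lemma one_in_max: "maximal_ideal P \<Longrightarrow> x \<in> P \<Longrightarrow> 1 - x \<in> P \<Longrightarrow> False"
proof -
  assume P: "maximal_ideal P" "x \<in> P" "1 - x \<in> P"
  then have "x + (1 - x) \<in> P" using tsi_add unfolding maximal_ideal_def by blast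
  then have "1 \<in> P" by simp
  then show False using max_tsi_proper[OF P(1)] by blast
qed

lemma step1:
  fixes N :: "'a::ring_1 set"
  assumes H: "\<forall>M N :: 'a set. maximal_ideal M \<and> maximal_ideal N \<and> M \<noteq> N \<longrightarrow> (\<exists>e. e \<in> M \<and> 1 - e \<in> N \<and> S e)"
    and N: "maximal_ideal N" and xN: "x - 1 \<in> N"
  shows "\<exists>g. S g \<and> g \<in> N \<and> (\<forall>P. maximal_ideal P \<and> x \<in> P \<longrightarrow> 1 - g \<in> P)"
proof -
  have tN: "two_sided_ideal N" using N by (simp add: maximal_ideal_def)
  let ?A = "{M. maximal_ideal M \<and> x \<in> M}"
  have "\<exists>f. f \<in> N \<and> 1 - f \<in> M \<and> S f" if M: "M \<in> ?A" for M
  proof -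
    have "M \<noteq> N"
    proof
      assume "M = N"
      then have "x - (x - 1) \<in> N" using M xN tN tsi_diff by blast
      then have "1 \<in> N" by simp
      then show False using max_tsi_proper[OF N] by blast
    qed
    then have "N \<noteq> M" by blast
    moreover have "maximal_ideal M" using M by simp
    ultimately show ?thesis using H[rule_format, of N M] N by blast
  qed
  then have "\<forall>M\<in>?A. \<exists>f. f \<in> N \<and> 1 - f \<in> M \<and> S f" by blast
  from bchoice[OF this] obtain f where f0: "\<forall>M\<in>?A. f M \<in> N \<and> 1 - f M \<in> M \<and> S (f M)" by blast
  have f: "\<And>M. M \<in> ?A \<Longrightarrow> f M \<in> N \<and> 1 - f M \<in> M \<and> S (f M)" using f0 by blast
  let ?X = "insert x (f ` ?A)"
  have "\<forall>P. maximal_ideal P \<longrightarrow> \<not> ?X \<subseteq> P"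
  proof (intro allI impI notI)
    fix P assume P: "maximal_ideal P" "?X \<subseteq> P"
    then have PA: "P \<in> ?A" by blast
    then have "f P \<in> P" using P by blast
    then show False using f[OF PA] one_in_max[OF P(1)] by blast
  qed
  from compact[OF this] obtain F where F: "finite F" "F \<subseteq> ?X" "\<forall>P. maximal_ideal P \<longrightarrow> \<not> F \<subseteq> P"
    by blast
  have sub: "F - {x} \<subseteq> f ` ?A" using F(2) by blast
  have fin: "finite (F - {x})" using F(1) by simp
  from finite_subset_image[OF fin sub] obtain A' where A': "A' \<subseteq> ?A" "finite A'" "F - {x} = f ` A'"
    by blast
  have ind: "B \<subseteq> ?A \<Longrightarrow> \<exists>g. S g \<and> g \<in> N \<and> (\<forall>P. maximal_ideal P \<and> \<not> f ` B \<subseteq> P \<longrightarrow> 1 - g \<in> P)"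
    if "finite B" for B
    using that
  proof (induction B rule: finite_induct)
    case empty
    then show ?case using S_zero tN tsi_zero by blast
  next
    case (insert M B)
    have "B \<subseteq> ?A" using insert.prems by blast
    from insert.IH[OF this] obtain g where g: "S g" "g \<in> N" "\<forall>P. maximal_ideal P \<and> \<not> f ` B \<subseteq> P \<longrightarrow> 1 - g \<in> P" by blast
    have "M \<in> ?A" using insert.prems by blast
    from f[OF this] have fM: "f M \<in> N" "S (f M)" by auto
    let ?g = "f M + g - f M * g"
    have "S ?g" using S_join fM g by blast
    moreover have "?g \<in> N"
      using tsi_diff[OF tN tsi_add[OF tN fM(1) g(2)] tsi_rmult[OF tN fM(1)]] .
    moreover have "1 - ?g \<in> P" if P: "maximal_ideal P" "\<not> f ` insert M B \<subseteq> P" for P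
    proof -
      have tP: "two_sided_ideal P" using P by (simp add: maximal_ideal_def)
      have eq: "1 - ?g = (1 - f M) * (1 - g)" by (simp add: algebra_simps)
      show ?thesis
      proof (cases "f M \<in> P")
        case False
        then have "1 - f M \<in> P" using dich[OF P(1) fM(2)] by blast
        then have "(1 - f M) * (1 - g) \<in> P" by (rule tsi_rmult[OF tP])
        then show ?thesis using eq by simp
      next
        case True
        then have "\<not> f ` B \<subseteq> P" using P(2) by blast
        then have "1 - g \<in> P" using g P(1) by blast
        then have "(1 - f M) * (1 - g) \<in> P" by (rule tsi_lmult[OF tP])
        then show ?thesis using eq by simp
      qed
    qed
    ultimately show ?case by blast
  qed
  from ind[OF A'(2) A'(1)] obtain g where g: "S g" "g \<in> N" "\<forall>P. maximal_ideal P \<and> \<not> f ` A' \<subseteq> P \<longrightarrow> 1 - g \<in> P"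
    by blast
  have "1 - g \<in> P" if P: "maximal_ideal P" "x \<in> P" for P
  proof -
    have "\<not> f ` A' \<subseteq> P"
    proof
      assume "f ` A' \<subseteq> P"
      then have "F - {x} \<subseteq> P" using A'(3) by simp
      then have "F \<subseteq> P" using P(2) by blast
      then show False using F(3) P(1) by blast
    qed
    then show ?thesis using g(3) P(1) by blast
  qed
  then show ?thesis using g(1,2) by blast
qed

lemma backward:
  fixes a :: "'a::ring_1"
  assumes H: "\<forall>M N :: 'a set. maximal_ideal M \<and> maximal_ideal N \<and> M \<noteq> N \<longrightarrow> (\<exists>e. e \<in> M \<and> 1 - e \<in> N \<and> S e)"
  shows "feckly_clean_elem a"
proof -
  let ?B = "{N. maximal_ideal N \<and> a - 1 \<in> N}"
  have "\<exists>g. S g \<and> g \<in> N \<and> (\<forall>P. maximal_ideal P \<and> a \<in> P \<longrightarrow> 1 - g \<in> P)" if "N \<in> ?B" for N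
    using step1[OF H, of N a] that by simp
  then have "\<forall>N\<in>?B. \<exists>g. S g \<and> g \<in> N \<and> (\<forall>P. maximal_ideal P \<and> a \<in> P \<longrightarrow> 1 - g \<in> P)" by blast
  from bchoice[OF this] obtain g where g0: "\<forall>N\<in>?B. S (g N) \<and> g N \<in> N \<and> (\<forall>P. maximal_ideal P \<and> a \<in> P \<longrightarrow> 1 - g N \<in> P)"
    by blast
  have g: "\<And>N. N \<in> ?B \<Longrightarrow> S (g N) \<and> g N \<in> N \<and> (\<forall>P. maximal_ideal P \<and> a \<in> P \<longrightarrow> 1 - g N \<in> P)"
    using g0 by blast
  let ?h = "\<lambda>N. 1 - g N"
  let ?X = "insert (a - 1) (?h ` ?B)"
  have "\<forall>P. maximal_ideal P \<longrightarrow> \<not> ?X \<subseteq> P"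
  proof (intro allI impI notI)
    fix P assume P: "maximal_ideal P" "?X \<subseteq> P"
    then have PB: "P \<in> ?B" by blast
    then have "1 - g P \<in> P" using P by blast
    then show False using g[OF PB] one_in_max[OF P(1)] by blast
  qed
  from compact[OF this] obtain F where F: "finite F" "F \<subseteq> ?X" "\<forall>P. maximal_ideal P \<longrightarrow> \<not> F \<subseteq> P"
    by blast
  have sub: "F - {a - 1} \<subseteq> ?h ` ?B" using F(2) by blast
  have fin: "finite (F - {a - 1})" using F(1) by simp
  from finite_subset_image[OF fin sub] obtain B' where B': "B' \<subseteq> ?B" "finite B'" "F - {a - 1} = ?h ` B'"
    by blast
  have ind: "C \<subseteq> ?B \<Longrightarrow> \<exists>e. S e \<and> (\<forall>P. maximal_ideal P \<and> a \<in> P \<longrightarrow> 1 - e \<in> P)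
           \<and> (\<forall>P. maximal_ideal P \<and> \<not> ?h ` C \<subseteq> P \<longrightarrow> e \<in> P)"
    if "finite C" for C
    using that
  proof (induction C rule: finite_induct)
    case empty
    have "1 - 1 \<in> P" if "maximal_ideal P" for P :: "'a set"
      using that tsi_zero[of P] unfolding maximal_ideal_def by auto
    then show ?case using S_one by blast
  next
    case (insert N C)
    have "C \<subseteq> ?B" using insert.prems by blast
    from insert.IH[OF this] obtain e where e: "S e" "\<forall>P. maximal_ideal P \<and> a \<in> P \<longrightarrow> 1 - e \<in> P"
      "\<forall>P. maximal_ideal P \<and> \<not> ?h ` C \<subseteq> P \<longrightarrow> e \<in> P" by blast
    have "N \<in> ?B" using insert.prems by blast
    from g[OF this] have gN: "S (g N)" "\<forall>P. maximal_ideal P \<and> a \<in> P \<longrightarrow> 1 - g N \<in> P" by auto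
    let ?e = "g N * e"
    have "S ?e" using S_mult gN e by blast
    moreover have "1 - ?e \<in> P" if P: "maximal_ideal P" "a \<in> P" for P
    proof -
      have tP: "two_sided_ideal P" using P by (simp add: maximal_ideal_def)
      have eq: "1 - ?e = (1 - g N) + g N * (1 - e)" by (simp add: algebra_simps)
      have h: "1 - g N \<in> P" "1 - e \<in> P" using gN e P by auto
      have "(1 - g N) + g N * (1 - e) \<in> P" using tsi_add[OF tP h(1) tsi_lmult[OF tP h(2)]] .
      then show ?thesis by (simp only: eq)
    qed
    moreover have "?e \<in> P" if P: "maximal_ideal P" "\<not> ?h ` insert N C \<subseteq> P" for P
    proof -
      have tP: "two_sided_ideal P" using P by (simp add: maximal_ideal_def)
      show ?thesis
      proof (cases "1 - g N \<in> P")
        case False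
        then have "g N \<in> P" using dich[OF P(1) gN(1)] by blast
        then show ?thesis by (rule tsi_rmult[OF tP])
      next
        case True
        then have "\<not> ?h ` C \<subseteq> P" using P(2) by blast
        then have "e \<in> P" using e P(1) by blast
        then show ?thesis by (rule tsi_lmult[OF tP])
      qed
    qed
    ultimately show ?case by blast
  qed
  from ind[OF B'(2) B'(1)] obtain e where e: "S e" "\<forall>P. maximal_ideal P \<and> a \<in> P \<longrightarrow> 1 - e \<in> P"
      "\<forall>P. maximal_ideal P \<and> \<not> ?h ` B' \<subseteq> P \<longrightarrow> e \<in> P"
    by blast
  have eB: "e \<in> P" if P: "maximal_ideal P" "a - 1 \<in> P" for P
  proof -
    have "\<not> ?h ` B' \<subseteq> P"
    proof
      assume "?h ` B' \<subseteq> P"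
      then have "F - {a - 1} \<subseteq> P" using B'(3) by simp
      then have "F \<subseteq> P" using P(2) by blast
      then show False using F(3) P(1) by blast
    qed
    then show ?thesis using e P by blast
  qed
  let ?u = "a - e"
  have "?u \<notin> P" if P: "maximal_ideal P" for P
  proof
    assume u: "?u \<in> P"
    have tP: "two_sided_ideal P" using P by (simp add: maximal_ideal_def)
    show False
    proof (cases "e \<in> P")
      case True
      then have "?u + e \<in> P" using u tP tsi_add by blast
      then have "a \<in> P" by simp
      then have "1 - e \<in> P" using e P by blast
      then show False using True one_in_max[OF P] by blast
    next
      case False
      then have ne: "1 - e \<in> P" using dich[OF P e(1)] by blast
      then have "?u - (1 - e) \<in> P" using u tP tsi_diff by blast
      moreover have "?u - (1 - e) = a - 1" by simp
      ultimately have "e \<in> P" using eB P by metis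
      then show False using False by blast
    qed
  qed
  then have "full ?u" using not_max_full by blast
  moreover have "a = e + ?u" by simp
  moreover have "\<forall>r. e * r * (1 - e) \<in> jacobson" using e(1) by (simp add: S_def)
  ultimately show ?thesis unfolding feckly_clean_elem_def by blast
qed

lemma forward:
  fixes M N :: "'a::ring_1 set"
  assumes fc: "feckly_clean TYPE('a)" and M: "maximal_ideal M" and N: "maximal_ideal N" and ne: "M \<noteq> N"
  shows "\<exists>e. e \<in> M \<and> 1 - e \<in> N \<and> S e"
proof -
  obtain m where m: "m \<in> M" "1 - m \<in> N" using comax[OF M N ne] by blast
  have "feckly_clean_elem (1 - m)" using fc unfolding feckly_clean_def by blast
  then obtain e u where eu: "full u" "1 - m = e + u" "S e"
    unfolding feckly_clean_elem_def S_def by blast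
  have tM: "two_sided_ideal M" using M by (simp add: maximal_ideal_def)
  have tN: "two_sided_ideal N" using N by (simp add: maximal_ideal_def)
  have "e \<in> M"
  proof (rule ccontr)
    assume "e \<notin> M"
    then have "1 - e \<in> M" using dich[OF M eu(3)] by blast
    then have "(1 - e) - m \<in> M" using m tM tsi_diff by blast
    moreover have "(1 - e) - m = u" using eu(2) by (simp add: algebra_simps)
    ultimately show False using full_not_max[OF eu(1) M] by simp
  qed
  moreover have "1 - e \<in> N"
  proof (rule ccontr)
    assume "1 - e \<notin> N"
    then have "e \<in> N" using dich[OF N eu(3)] by blast
    then have "(1 - m) - e \<in> N" using m tN tsi_diff by blast
    moreover have "(1 - m) - e = u" using eu(2) by (simp add: algebra_simps)
    ultimately show False using full_not_max[OF eu(1) N] by simp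
  qed
  ultimately show ?thesis using eu(3) by blast
qed

theorem theorem2p6:
  "feckly_clean TYPE('a::ring_1) \<longleftrightarrow>
     (\<forall>M N :: 'a set. maximal_ideal M \<and> maximal_ideal N \<and> M \<noteq> N \<longrightarrow>
        (\<exists>e. e \<in> M \<and> 1 - e \<in> N \<and> (\<forall>r. e * r * (1 - e) \<in> jacobson)))"
proof
  assume "feckly_clean TYPE('a)"
  then show "\<forall>M N :: 'a set. maximal_ideal M \<and> maximal_ideal N \<and> M \<noteq> N \<longrightarrow>
        (\<exists>e. e \<in> M \<and> 1 - e \<in> N \<and> (\<forall>r. e * r * (1 - e) \<in> jacobson))"
    using forward unfolding S_def by blast
next
  assume "\<forall>M N :: 'a set. maximal_ideal M \<and> maximal_ideal N \<and> M \<noteq> N \<longrightarrow>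
        (\<exists>e. e \<in> M \<and> 1 - e \<in> N \<and> (\<forall>r. e * r * (1 - e) \<in> jacobson))"
  then have "\<forall>M N :: 'a set. maximal_ideal M \<and> maximal_ideal N \<and> M \<noteq> N \<longrightarrow> (\<exists>e. e \<in> M \<and> 1 - e \<in> N \<and> S e)"
    unfolding S_def by blast
  then show "feckly_clean TYPE('a)" unfolding feckly_clean_def using backward by blast
qed


end
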